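(* Let $k\in\mathbb{Z}$, let $\phi:(0,\infty)\to\mathbb{R}$ be smooth and satisfy (H1) and (H2), and let $\varphi\in L^2$. Then for $2\leq q\leq\infty$, $$\Big\|\int_0^\infty\psi_k(s)\varphi(s)e^{-it\phi(s)}\,ds\Big\|_{L^q_t(\mathbb{R})}\lesssim 2^{(\frac12-\frac{m(k)}{q})k}\|\psi_k\varphi\|_{L^2},$$ with implicit constant independent of $k$ and $\varphi$.
   Context: $\Phi:\mathbb{R}\to[0,1]$ is smooth even, supported in $\{|x|\le2\}$, $\Phi=1$ on $\{|x|\le1\}$; $\psi(x)=\Phi(x)-\Phi(2x)$, $\psi_k(s)=\psi(2^{-k}s)$. (H1): there is $m_1>0$ with $|\phi'(r)|\sim r^{m_1-1}$, $|\phi^{(\alpha)}(r)|\lesssim r^{m_1-\alpha}$ for all integers $\alpha\ge2$, $r\ge1$. (H2): there is $m_2>0$ with the same bounds with $m_2$ for $0<r<1$. $m(k)=m_1$ if $k\ge0$, $m(k)=m_2$ if $k<0$. *)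

theory Defs
  imports "HOL-Analysis.Analysis"
begin

definition smooth_on :: "real set \<Rightarrow> (real \<Rightarrow> real) \<Rightarrow> bool" where
  "smooth_on S f \<longleftrightarrow> (\<forall>n. \<forall>x\<in>S. ((deriv ^^ n) f) differentiable (at x))"

definition bump :: "(real \<Rightarrow> real) \<Rightarrow> bool" where
  "bump Phi \<longleftrightarrow> smooth_on UNIV Phi \<and> (\<forall>x. Phi (-x) = Phi x)
     \<and> (\<forall>x. 0 \<le> Phi x \<and> Phi x \<le> 1)
     \<and> (\<forall>x. \<bar>x\<bar> > 2 \<longrightarrow> Phi x = 0) \<and> (\<forall>x. \<bar>x\<bar> \<le> 1 \<longrightarrow> Phi x = 1)"

definition psi :: "(real \<Rightarrow> real) \<Rightarrow> real \<Rightarrow> real" where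
  "psi Phi x = Phi x - Phi (2 * x)"

definition psik :: "(real \<Rightarrow> real) \<Rightarrow> int \<Rightarrow> real \<Rightarrow> real" where
  "psik Phi k s = psi Phi (2 powr (- real_of_int k) * s)"

definition H1 :: "(real \<Rightarrow> real) \<Rightarrow> real \<Rightarrow> bool" where
  "H1 phi m1 \<longleftrightarrow> m1 > 0
     \<and> (\<exists>c C. c > 0 \<and> (\<forall>r. r \<ge> 1 \<longrightarrow>
           c * r powr (m1 - 1) \<le> \<bar>deriv phi r\<bar> \<and> \<bar>deriv phi r\<bar> \<le> C * r powr (m1 - 1)))
     \<and> (\<forall>a::nat. a \<ge> 2 \<longrightarrow> (\<exists>C. \<forall>r. r \<ge> 1 \<longrightarrow>
           \<bar>(deriv ^^ a) phi r\<bar> \<le> C * r powr (m1 - real a)))"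

definition H2 :: "(real \<Rightarrow> real) \<Rightarrow> real \<Rightarrow> bool" where
  "H2 phi m2 \<longleftrightarrow> m2 > 0
     \<and> (\<exists>c C. c > 0 \<and> (\<forall>r. 0 < r \<and> r < 1 \<longrightarrow>
           c * r powr (m2 - 1) \<le> \<bar>deriv phi r\<bar> \<and> \<bar>deriv phi r\<bar> \<le> C * r powr (m2 - 1)))
     \<and> (\<forall>a::nat. a \<ge> 2 \<longrightarrow> (\<exists>C. \<forall>r. 0 < r \<and> r < 1 \<longrightarrow>
           \<bar>(deriv ^^ a) phi r\<bar> \<le> C * r powr (m2 - real a)))"

definition mk :: "real \<Rightarrow> real \<Rightarrow> int \<Rightarrow> real" where
  "mk m1 m2 k = (if k \<ge> 0 then m1 else m2)"

definition L2pos :: "(real \<Rightarrow> complex) \<Rightarrow> bool" where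
  "L2pos f \<longleftrightarrow> set_borel_measurable lborel {0<..} f
     \<and> set_integrable lborel {0<..} (\<lambda>s. (cmod (f s))\<^sup>2)"

definition osc :: "(real \<Rightarrow> real) \<Rightarrow> (real \<Rightarrow> real) \<Rightarrow> int \<Rightarrow> (real \<Rightarrow> complex) \<Rightarrow> real \<Rightarrow> complex" where
  "osc Phi phi k f t = (LINT s:{0<..}|lborel.
      complex_of_real (psik Phi k s) * f s * exp (- \<i> * complex_of_real (t * phi s)))"

definition L2norm_k :: "(real \<Rightarrow> real) \<Rightarrow> int \<Rightarrow> (real \<Rightarrow> complex) \<Rightarrow> real" where
  "L2norm_k Phi k f = sqrt (LINT s:{0<..}|lborel. (cmod (complex_of_real (psik Phi k s) * f s))\<^sup>2)"

end

theory Submission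
  imports Defs "HOL-Probability.Probability"
begin


lemma integrable_prod_lborel:
  fixes f g :: "real \<Rightarrow> 'b::{real_normed_field, banach, second_countable_topology}"
  assumes f: "integrable lborel f" and g: "integrable lborel g"
  shows "integrable (lborel \<Otimes>\<^sub>M lborel) (\<lambda>p. f (fst p) * g (snd p))"
proof -
  have [measurable]: "f \<in> borel_measurable borel" "g \<in> borel_measurable borel"
    using f g by (auto dest: borel_measurable_integrable)
  have "(\<integral>\<^sup>+p. ennreal (norm (f (fst p) * g (snd p))) \<partial>(lborel \<Otimes>\<^sub>M lborel))
      = (\<integral>\<^sup>+x. \<integral>\<^sup>+y. ennreal (norm (f x)) * ennreal (norm (g y)) \<partial>lborel \<partial>lborel)"
    by (subst sigma_finite_measure.nn_integral_fst[OF sigma_finite_lborel, symmetric]) (auto simp: norm_mult ennreal_mult)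
  also have "\<dots> = (\<integral>\<^sup>+x. ennreal (norm (f x)) \<partial>lborel) * (\<integral>\<^sup>+y. ennreal (norm (g y)) \<partial>lborel)"
    by (simp add: nn_integral_cmult nn_integral_multc)
  also have "\<dots> < \<infinity>" using f g unfolding integrable_iff_bounded by (simp add: ennreal_mult_less_top)
  finally show ?thesis unfolding integrable_iff_bounded by simp
qed

lemma fubini_osc:
  fixes w F :: "real \<Rightarrow> complex" and \<alpha> :: "real \<Rightarrow> real"
  assumes w: "integrable lborel w" and F: "integrable lborel F" and [measurable]: "\<alpha> \<in> borel_measurable borel"
  shows "(\<integral>t. w t * (\<integral>s. F s * exp (- \<i> * complex_of_real (t * \<alpha> s)) \<partial>lborel) \<partial>lborel)
       = (\<integral>s. F s * (\<integral>t. w t * exp (- \<i> * complex_of_real (t * \<alpha> s)) \<partial>lborel) \<partial>lborel)"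
proof -
  have [measurable]: "w \<in> borel_measurable borel" "F \<in> borel_measurable borel"
    using w F by (auto dest: borel_measurable_integrable)
  let ?H = "\<lambda>t s. w t * F s * exp (- \<i> * complex_of_real (t * \<alpha> s))"
  have int: "integrable (lborel \<Otimes>\<^sub>M lborel) (case_prod ?H)"
  proof (rule Bochner_Integration.integrable_bound[OF integrable_prod_lborel[OF w F]])
    show "case_prod ?H \<in> borel_measurable (lborel \<Otimes>\<^sub>M lborel)" by measurable
    show "AE p in lborel \<Otimes>\<^sub>M lborel. norm (case_prod ?H p) \<le> norm (w (fst p) * F (snd p))"
      by (auto simp: norm_mult)
  qed
  have "(\<integral>t. w t * (\<integral>s. F s * exp (- \<i> * complex_of_real (t * \<alpha> s)) \<partial>lborel) \<partial>lborel)
      = (\<integral>t. (\<integral>s. ?H t s \<partial>lborel) \<partial>lborel)"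
    by (simp add: mult.assoc)
  also have "\<dots> = (\<integral>s. (\<integral>t. ?H t s \<partial>lborel) \<partial>lborel)"
    using lborel_pair.Fubini_integral[OF int] by simp
  also have "\<dots> = (\<integral>s. F s * (\<integral>t. w t * exp (- \<i> * complex_of_real (t * \<alpha> s)) \<partial>lborel) \<partial>lborel)"
  proof (rule Bochner_Integration.integral_cong[OF refl])
    fix s
    have "(\<integral>t. ?H t s \<partial>lborel) = (\<integral>t. F s * (w t * exp (- \<i> * complex_of_real (t * \<alpha> s))) \<partial>lborel)"
      by (simp add: ac_simps)
    also have "\<dots> = F s * (\<integral>t. w t * exp (- \<i> * complex_of_real (t * \<alpha> s)) \<partial>lborel)"
      by (rule integral_mult_right_zero)
    finally show "(\<integral>t. ?H t s \<partial>lborel) = F s * (\<integral>t. w t * exp (- \<i> * complex_of_real (t * \<alpha> s)) \<partial>lborel)" .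
  qed
  finally show ?thesis .
qed




lemma gauss_integrable:
  fixes n :: real assumes n: "n > 0"
  shows "integrable lborel (\<lambda>t. exp (-(t/n)\<^sup>2/2))"
proof -
  have "(\<lambda>t. exp (-(t/n)\<^sup>2/2)) = (\<lambda>t. sqrt (2*pi*n\<^sup>2) * normal_density 0 n t)"
    using n by (auto simp: normal_density_def power_divide field_simps)
  then show ?thesis using n by simp
qed

lemma gauss_fourier_std:
  "(\<integral>u. complex_of_real (exp (-u\<^sup>2/2)) * exp (\<i> * complex_of_real (\<theta> * u)) \<partial>lborel)
     = complex_of_real (sqrt (2*pi) * exp (-\<theta>\<^sup>2/2))"
proof -
  have "char std_normal_distribution \<theta> = (\<integral>u. std_normal_density u *\<^sub>R exp (\<i> * complex_of_real (\<theta> * u)) \<partial>lborel)"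
    unfolding char_def by (subst integral_density) auto
  also have "\<dots> = (\<integral>u. complex_of_real (1 / sqrt (2*pi)) * (complex_of_real (exp (-u\<^sup>2/2)) * exp (\<i> * complex_of_real (\<theta> * u))) \<partial>lborel)"
    by (simp add: std_normal_density_def scaleR_conv_of_real)
  also have "\<dots> = complex_of_real (1 / sqrt (2*pi)) * (\<integral>u. complex_of_real (exp (-u\<^sup>2/2)) * exp (\<i> * complex_of_real (\<theta> * u)) \<partial>lborel)"
    by (rule integral_mult_right_zero)
  finally have "complex_of_real (exp (- \<theta>\<^sup>2 / 2)) = complex_of_real (1 / sqrt (2*pi)) * (\<integral>u. complex_of_real (exp (-u\<^sup>2/2)) * exp (\<i> * complex_of_real (\<theta> * u)) \<partial>lborel)"
    by (simp add: char_std_normal_distribution)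
  then show ?thesis by (simp add: field_simps)
qed

lemma gauss_kernel:
  fixes n :: real assumes n: "n > 0"
  shows "(\<integral>t. complex_of_real (exp (-(t/n)\<^sup>2/2)) * exp (- \<i> * complex_of_real (t * x)) \<partial>lborel)
     = complex_of_real (n * sqrt (2*pi) * exp (-(n*x)\<^sup>2/2))"
proof -
  have "(\<integral>t. complex_of_real (exp (-(t/n)\<^sup>2/2)) * exp (- \<i> * complex_of_real (t * x)) \<partial>lborel)
      = \<bar>n\<bar> *\<^sub>R (\<integral>u. complex_of_real (exp (-((0 + n*u)/n)\<^sup>2/2)) * exp (- \<i> * complex_of_real ((0 + n*u) * x)) \<partial>lborel)"
    using n by (intro lborel_integral_real_affine) auto
  also have "(\<lambda>u. complex_of_real (exp (-((0 + n*u)/n)\<^sup>2/2)) * exp (- \<i> * complex_of_real ((0 + n*u) * x)))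
      = (\<lambda>u. complex_of_real (exp (-u\<^sup>2/2)) * exp (\<i> * complex_of_real ((-(n*x)) * u)))"
    using n by (auto simp: field_simps)
  also have "(\<integral>u. complex_of_real (exp (-u\<^sup>2/2)) * exp (\<i> * complex_of_real ((-(n*x)) * u)) \<partial>lborel)
     = complex_of_real (sqrt (2*pi) * exp (-(-(n*x))\<^sup>2/2))"
    by (rule gauss_fourier_std)
  finally show ?thesis using n by (simp add: scaleR_conv_of_real power_mult_distrib)
qed

definition gk :: "real \<Rightarrow> real \<Rightarrow> real" where
  "gk n x = n * sqrt (2*pi) * exp (-(n*x)\<^sup>2/2)"

lemma gk_nonneg: "n > 0 \<Longrightarrow> 0 \<le> gk n x"
  unfolding gk_def by simp

lemma gk_le: "n > 0 \<Longrightarrow> gk n x \<le> n * sqrt (2*pi)"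
  unfolding gk_def by (simp add: mult_left_le)

lemma gk_even: "gk n (- x) = gk n x"
  unfolding gk_def by simp

lemma gk_mono: assumes "n > 0" "\<bar>y\<bar> \<le> \<bar>x\<bar>" shows "gk n x \<le> gk n y"
proof -
  have "(n*y)\<^sup>2 \<le> (n*x)\<^sup>2" using assms
    by (simp add: power_mult_distrib abs_le_square_iff mult_left_mono)
  then show ?thesis using assms unfolding gk_def by (intro mult_left_mono) auto
qed

lemma gk_meas[measurable]: "(\<lambda>x. gk n x) \<in> borel_measurable borel"
  unfolding gk_def by measurable

lemma std_gauss_integral: "(\<integral>u. exp (-(u::real)\<^sup>2/2) \<partial>lborel) = sqrt (2*pi)"
proof -
  have "(\<integral>u. exp (-(u::real)\<^sup>2/2) \<partial>lborel) = (\<integral>u. sqrt (2*pi) * normal_density 0 1 u \<partial>lborel)"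
    by (rule Bochner_Integration.integral_cong) (auto simp: std_normal_density_def)
  also have "\<dots> = sqrt (2*pi)" by simp
  finally show ?thesis .
qed

lemma gk_integral:
  fixes n c s :: real assumes n: "n > 0" and c: "c > 0"
  shows "integrable lborel (\<lambda>x. gk n (c * (s - x)))"
    and "(\<integral>x. gk n (c * (s - x)) \<partial>lborel) = 2 * pi / c"
proof -
  have f: "integrable lborel (\<lambda>u::real. exp (-u\<^sup>2/2))" using gauss_integrable[of 1] by simp
  have nc: "-(n*c) \<noteq> 0" using n c by simp
  have eq: "(\<lambda>x. exp (-(n * c * s + (-(n*c)) * x)\<^sup>2/2)) = (\<lambda>x. exp (-(n*(c * (s - x)))\<^sup>2/2))"
    by (auto simp: algebra_simps)
  have i2: "integrable lborel (\<lambda>x. exp (-(n*(c * (s - x)))\<^sup>2/2))"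
    using lborel_integrable_real_affine[OF f nc, of "n * c * s"] unfolding eq .
  then show "integrable lborel (\<lambda>x. gk n (c * (s - x)))" unfolding gk_def by simp
  have "sqrt (2*pi) = \<bar>-(n*c)\<bar> *\<^sub>R (\<integral>x. exp (-(n * c * s + (-(n*c)) * x)\<^sup>2/2) \<partial>lborel)"
    using lborel_integral_real_affine[OF nc, of "\<lambda>u. exp (-u\<^sup>2/2)" "n * c * s"] std_gauss_integral by simp
  then have I: "(\<integral>x. exp (-(n*(c * (s - x)))\<^sup>2/2) \<partial>lborel) = sqrt (2*pi) / (n*c)"
    using n c unfolding eq by (simp add: field_simps)
  have "(\<integral>x. gk n (c * (s - x)) \<partial>lborel) = n * sqrt (2*pi) * (\<integral>x. exp (-(n*(c * (s - x)))\<^sup>2/2) \<partial>lborel)"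
    unfolding gk_def by (rule integral_mult_right_zero)
  also have "\<dots> = n * sqrt (2*pi) * (sqrt (2*pi) / (n*c))" by (simp only: I)
  also have "\<dots> = 2 * pi / c" using n c by (simp add: field_simps)
  finally show "(\<integral>x. gk n (c * (s - x)) \<partial>lborel) = 2 * pi / c" .
qed




lemma le_1_sq: "(x::real) \<ge> 0 \<Longrightarrow> x \<le> 1 + x\<^sup>2"
proof -
  assume "x \<ge> 0"
  have "0 \<le> (x - 1)\<^sup>2" by simp
  then have "2 * x \<le> 1 + x\<^sup>2" by (simp add: power2_eq_square algebra_simps)
  then show ?thesis using \<open>x \<ge> 0\<close> by linarith
qed


context
  fixes F :: "real \<Rightarrow> complex" and \<alpha> :: "real \<Rightarrow> real" and a b c :: real
  assumes Fm[measurable]: "F \<in> borel_measurable borel"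
    and am[measurable]: "\<alpha> \<in> borel_measurable borel"
    and Fsupp: "\<And>s. s \<notin> {a..b} \<Longrightarrow> F s = 0"
    and F2: "integrable lborel (\<lambda>s. (cmod (F s))\<^sup>2)"
    and cpos: "c > 0"
    and sep: "\<And>s s'. s \<in> {a..b} \<Longrightarrow> s' \<in> {a..b} \<Longrightarrow> c * \<bar>s - s'\<bar> \<le> \<bar>\<alpha> s - \<alpha> s'\<bar>"
begin

lemma F_int: "integrable lborel F"
proof (rule Bochner_Integration.integrable_bound)
  show "integrable lborel (\<lambda>s. indicator {a..b} s + (cmod (F s))\<^sup>2 :: real)"
    using F2 by (intro Bochner_Integration.integrable_add integrable_real_indicator) (auto simp: emeasure_lborel_Icc_eq)
  show "AE s in lborel. norm (F s) \<le> norm (indicator {a..b} s + (cmod (F s))\<^sup>2 :: real)"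
  proof (intro AE_I2)
    fix s
    show "norm (F s) \<le> norm (indicator {a..b} s + (cmod (F s))\<^sup>2 :: real)"
    proof (cases "s \<in> {a..b}")
      case True
      have "cmod (F s) \<le> 1 + (cmod (F s))\<^sup>2" by (rule le_1_sq) simp
      then show ?thesis using True by auto
    qed (auto simp: Fsupp)
  qed
qed simp

definition "Osc t = (\<integral>s. F s * exp (- \<i> * complex_of_real (t * \<alpha> s)) \<partial>lborel)"

lemma O_meas[measurable]: "Osc \<in> borel_measurable borel"
  unfolding Osc_def[abs_def] by measurable

lemma cnjO_meas[measurable]: "(\<lambda>t. cnj (Osc t)) \<in> borel_measurable borel"
  by (rule borel_measurable_continuous_on[where f=cnj, OF _ O_meas]) (intro continuous_intros)

lemma O_bound: "cmod (Osc t) \<le> (\<integral>s. cmod (F s) \<partial>lborel)"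
proof -
  have "cmod (Osc t) \<le> (\<integral>s. norm (F s * exp (- \<i> * complex_of_real (t * \<alpha> s))) \<partial>lborel)"
    unfolding Osc_def by (rule integral_norm_bound)
  also have "\<dots> = (\<integral>s. cmod (F s) \<partial>lborel)"
    by (simp add: norm_mult)
  finally show ?thesis .
qed


lemma J_eq:
  fixes n :: real assumes n: "n > 0"
  shows "(\<integral>t. complex_of_real (exp (-(t/n)\<^sup>2/2)) * (Osc t * cnj (Osc t)) \<partial>lborel)
    = (\<integral>s. F s * (\<integral>s'. cnj (F s') * complex_of_real (gk n (\<alpha> s - \<alpha> s')) \<partial>lborel) \<partial>lborel)"
proof -
  define W where "W t = complex_of_real (exp (-(t/n)\<^sup>2/2))" for t
  have Wm[measurable]: "W \<in> borel_measurable borel" unfolding W_def[abs_def] by measurable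
  have Wint: "integrable lborel W" unfolding W_def using gauss_integrable[OF n] by simp
  define M where "M = (\<integral>s. cmod (F s) \<partial>lborel)"
  have cnjO: "cnj (Osc t) = (\<integral>s'. cnj (F s') * exp (- \<i> * complex_of_real (t * (- \<alpha> s'))) \<partial>lborel)" for t
    unfolding Osc_def by (subst Bochner_Integration.integral_cnj[symmetric], rule Bochner_Integration.integral_cong) (auto simp: exp_cnj)
  have int1: "integrable lborel (\<lambda>t. W t * cnj (Osc t))"
  proof (rule Bochner_Integration.integrable_bound)
    show "integrable lborel (\<lambda>t. M * exp (-(t/n)\<^sup>2/2))" using gauss_integrable[OF n] by simp
    show "AE t in lborel. norm (W t * cnj (Osc t)) \<le> norm (M * exp (-(t/n)\<^sup>2/2))"
    proof (intro AE_I2)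
      fix t
      have "norm (W t * cnj (Osc t)) = exp (-(t/n)\<^sup>2/2) * cmod (Osc t)"
        by (simp add: W_def norm_mult)
      also have "\<dots> \<le> exp (-(t/n)\<^sup>2/2) * M" unfolding M_def by (intro mult_left_mono O_bound) auto
      also have "\<dots> \<le> norm (M * exp (-(t/n)\<^sup>2/2))" by (simp add: abs_mult)
      finally show "norm (W t * cnj (Osc t)) \<le> norm (M * exp (-(t/n)\<^sup>2/2))" .
    qed
  qed measurable
  have "(\<integral>t. complex_of_real (exp (-(t/n)\<^sup>2/2)) * (Osc t * cnj (Osc t)) \<partial>lborel)
      = (\<integral>t. (W t * cnj (Osc t)) * (\<integral>s. F s * exp (- \<i> * complex_of_real (t * \<alpha> s)) \<partial>lborel) \<partial>lborel)"
    unfolding W_def Osc_def by (simp add: ac_simps)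
  also have "\<dots> = (\<integral>s. F s * (\<integral>t. (W t * cnj (Osc t)) * exp (- \<i> * complex_of_real (t * \<alpha> s)) \<partial>lborel) \<partial>lborel)"
    by (rule fubini_osc[OF int1 F_int am])
  also have "\<dots> = (\<integral>s. F s * (\<integral>s'. cnj (F s') * complex_of_real (gk n (\<alpha> s - \<alpha> s')) \<partial>lborel) \<partial>lborel)"
  proof (rule Bochner_Integration.integral_cong[OF refl], rule arg_cong[where f="\<lambda>x. F _ * x"])
    fix s
    have int2: "integrable lborel (\<lambda>t. W t * exp (- \<i> * complex_of_real (t * \<alpha> s)))"
      by (rule Bochner_Integration.integrable_bound[OF Wint]) (auto simp: norm_mult)
    have Fc: "integrable lborel (\<lambda>s'. cnj (F s'))" using F_int by simp
    have "(\<integral>t. (W t * cnj (Osc t)) * exp (- \<i> * complex_of_real (t * \<alpha> s)) \<partial>lborel)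
      = (\<integral>t. (W t * exp (- \<i> * complex_of_real (t * \<alpha> s))) * (\<integral>s'. cnj (F s') * exp (- \<i> * complex_of_real (t * (- \<alpha> s'))) \<partial>lborel) \<partial>lborel)"
      by (simp add: cnjO ac_simps)
    also have "\<dots> = (\<integral>s'. cnj (F s') * (\<integral>t. (W t * exp (- \<i> * complex_of_real (t * \<alpha> s))) * exp (- \<i> * complex_of_real (t * (- \<alpha> s'))) \<partial>lborel) \<partial>lborel)"
      by (rule fubini_osc[OF int2 Fc]) simp
    also have "\<dots> = (\<integral>s'. cnj (F s') * complex_of_real (gk n (\<alpha> s - \<alpha> s')) \<partial>lborel)"
    proof (rule Bochner_Integration.integral_cong[OF refl], rule arg_cong[where f="\<lambda>x. cnj (F _) * x"])
      fix s'
      have "(\<integral>t. (W t * exp (- \<i> * complex_of_real (t * \<alpha> s))) * exp (- \<i> * complex_of_real (t * (- \<alpha> s'))) \<partial>lborel)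
         = (\<integral>t. complex_of_real (exp (-(t/n)\<^sup>2/2)) * exp (- \<i> * complex_of_real (t * (\<alpha> s - \<alpha> s'))) \<partial>lborel)"
        unfolding W_def by (rule Bochner_Integration.integral_cong[OF refl]) (simp add: mult.assoc exp_add[symmetric] algebra_simps)
      also have "\<dots> = complex_of_real (gk n (\<alpha> s - \<alpha> s'))"
        unfolding gk_def by (rule gauss_kernel[OF n])
      finally show "(\<integral>t. (W t * exp (- \<i> * complex_of_real (t * \<alpha> s))) * exp (- \<i> * complex_of_real (t * (- \<alpha> s'))) \<partial>lborel) = complex_of_real (gk n (\<alpha> s - \<alpha> s'))" .
    qed
    finally show "(\<integral>t. (W t * cnj (Osc t)) * exp (- \<i> * complex_of_real (t * \<alpha> s)) \<partial>lborel) = (\<integral>s'. cnj (F s') * complex_of_real (gk n (\<alpha> s - \<alpha> s')) \<partial>lborel)" .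
  qed
  finally show ?thesis .
qed


lemma normF_int: "integrable lborel (\<lambda>s. cmod (F s))"
  using F_int by simp

lemma intFg:
  assumes n: "n > 0" and hm[measurable]: "h \<in> borel_measurable borel"
  shows "integrable lborel (\<lambda>s'. cmod (F s') * gk n (h s'))"
proof (rule Bochner_Integration.integrable_bound)
  show "integrable lborel (\<lambda>s'. n * sqrt (2*pi) * cmod (F s'))" using normF_int by simp
  show "AE s' in lborel. norm (cmod (F s') * gk n (h s')) \<le> norm (n * sqrt (2*pi) * cmod (F s'))"
    using n by (intro AE_I2) (auto simp: abs_mult gk_nonneg gk_le mult.commute[of "cmod _"] intro!: mult_right_mono)
qed measurable

lemma G_bound:
  assumes n: "n > 0" and hm[measurable]: "h \<in> borel_measurable borel"
  shows "0 \<le> (\<integral>s'. cmod (F s') * gk n (h s') \<partial>lborel)"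
    and "(\<integral>s'. cmod (F s') * gk n (h s') \<partial>lborel) \<le> n * sqrt (2*pi) * (\<integral>s. cmod (F s) \<partial>lborel)"
proof -
  show "0 \<le> (\<integral>s'. cmod (F s') * gk n (h s') \<partial>lborel)"
    using n by (intro integral_nonneg_AE AE_I2) (auto simp: gk_nonneg)
  have "(\<integral>s'. cmod (F s') * gk n (h s') \<partial>lborel) \<le> (\<integral>s'. n * sqrt (2*pi) * cmod (F s') \<partial>lborel)"
    using n normF_int by (intro integral_mono') (auto simp: gk_nonneg gk_le mult.commute[of "cmod _"] intro!: mult_right_mono)
  also have "\<dots> = n * sqrt (2*pi) * (\<integral>s. cmod (F s) \<partial>lborel)" by simp
  finally show "(\<integral>s'. cmod (F s') * gk n (h s') \<partial>lborel) \<le> n * sqrt (2*pi) * (\<integral>s. cmod (F s) \<partial>lborel)" .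
qed

lemma intFG:
  assumes n: "n > 0" and hm[measurable]: "(\<lambda>(s, s'). h s s') \<in> borel_measurable (borel \<Otimes>\<^sub>M lborel)"
    and hm2: "\<And>s. h s \<in> borel_measurable borel"
  shows "integrable lborel (\<lambda>s. cmod (F s) * (\<integral>s'. cmod (F s') * gk n (h s s') \<partial>lborel))"
proof (rule Bochner_Integration.integrable_bound)
  show "integrable lborel (\<lambda>s. (n * sqrt (2*pi) * (\<integral>s. cmod (F s) \<partial>lborel)) * cmod (F s))" using normF_int by simp
  show "AE s in lborel. norm (cmod (F s) * (\<integral>s'. cmod (F s') * gk n (h s s') \<partial>lborel))
      \<le> norm ((n * sqrt (2*pi) * (\<integral>s. cmod (F s) \<partial>lborel)) * cmod (F s))"
  proof (intro AE_I2)
    fix s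
    note G = G_bound[OF n hm2[of s]]
    have "0 \<le> (\<integral>s. cmod (F s) \<partial>lborel)" by simp
    then show "norm (cmod (F s) * (\<integral>s'. cmod (F s') * gk n (h s s') \<partial>lborel))
      \<le> norm ((n * sqrt (2*pi) * (\<integral>s. cmod (F s) \<partial>lborel)) * cmod (F s))"
      using G n by (auto simp: abs_mult mult.commute[of "cmod _"] intro!: mult_right_mono)
  qed
  show "(\<lambda>s. cmod (F s) * (\<integral>s'. cmod (F s') * gk n (h s s') \<partial>lborel)) \<in> borel_measurable lborel"
    by measurable
qed


lemma J_le:
  fixes n :: real assumes n: "n > 0"
  shows "(\<integral>t. exp (-(t/n)\<^sup>2/2) * (cmod (Osc t))\<^sup>2 \<partial>lborel)
    \<le> (\<integral>s. cmod (F s) * (\<integral>s'. cmod (F s') * gk n (c * (s - s')) \<partial>lborel) \<partial>lborel)"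
proof -
  define R where "R = (\<integral>t. exp (-(t/n)\<^sup>2/2) * (cmod (Osc t))\<^sup>2 \<partial>lborel)"
  have "complex_of_real R = (\<integral>t. complex_of_real (exp (-(t/n)\<^sup>2/2) * (cmod (Osc t))\<^sup>2) \<partial>lborel)"
    unfolding R_def by (rule integral_complex_of_real[symmetric])
  also have "\<dots> = (\<integral>t. complex_of_real (exp (-(t/n)\<^sup>2/2)) * (Osc t * cnj (Osc t)) \<partial>lborel)"
    by (rule Bochner_Integration.integral_cong[OF refl]) (simp only: of_real_mult complex_norm_square)
  also have "\<dots> = (\<integral>s. F s * (\<integral>s'. cnj (F s') * complex_of_real (gk n (\<alpha> s - \<alpha> s')) \<partial>lborel) \<partial>lborel)"
    by (rule J_eq[OF n])
  finally have eqR: "complex_of_real R = \<dots>" .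
  have "R \<le> cmod (complex_of_real R)" by simp
  also have "\<dots> \<le> (\<integral>s. norm (F s * (\<integral>s'. cnj (F s') * complex_of_real (gk n (\<alpha> s - \<alpha> s')) \<partial>lborel)) \<partial>lborel)"
    unfolding eqR by (rule integral_norm_bound)
  also have "\<dots> \<le> (\<integral>s. cmod (F s) * (\<integral>s'. cmod (F s') * gk n (\<alpha> s - \<alpha> s') \<partial>lborel) \<partial>lborel)"
  proof (rule integral_mono')
    show "integrable lborel (\<lambda>s. cmod (F s) * (\<integral>s'. cmod (F s') * gk n (\<alpha> s - \<alpha> s') \<partial>lborel))"
      by (rule intFG[OF n]) auto
    fix s
    show "0 \<le> cmod (F s) * (\<integral>s'. cmod (F s') * gk n (\<alpha> s - \<alpha> s') \<partial>lborel)"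
      using G_bound(1)[OF n, of "\<lambda>s'. \<alpha> s - \<alpha> s'"] by simp
    have "cmod (\<integral>s'. cnj (F s') * complex_of_real (gk n (\<alpha> s - \<alpha> s')) \<partial>lborel)
        \<le> (\<integral>s'. norm (cnj (F s') * complex_of_real (gk n (\<alpha> s - \<alpha> s'))) \<partial>lborel)"
      by (rule integral_norm_bound)
    also have "\<dots> = (\<integral>s'. cmod (F s') * gk n (\<alpha> s - \<alpha> s') \<partial>lborel)"
      using n by (intro Bochner_Integration.integral_cong) (auto simp: norm_mult gk_nonneg)
    finally show "norm (F s * (\<integral>s'. cnj (F s') * complex_of_real (gk n (\<alpha> s - \<alpha> s')) \<partial>lborel))
       \<le> cmod (F s) * (\<integral>s'. cmod (F s') * gk n (\<alpha> s - \<alpha> s') \<partial>lborel)"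
      by (simp add: norm_mult mult_left_mono)
  qed
  also have "\<dots> \<le> (\<integral>s. cmod (F s) * (\<integral>s'. cmod (F s') * gk n (c * (s - s')) \<partial>lborel) \<partial>lborel)"
  proof (rule integral_mono')
    show "integrable lborel (\<lambda>s. cmod (F s) * (\<integral>s'. cmod (F s') * gk n (c * (s - s')) \<partial>lborel))"
      by (rule intFG[OF n]) auto
    fix s
    show "0 \<le> cmod (F s) * (\<integral>s'. cmod (F s') * gk n (c * (s - s')) \<partial>lborel)"
      using G_bound(1)[OF n, of "\<lambda>s'. c * (s - s')"] by simp
    show "cmod (F s) * (\<integral>s'. cmod (F s') * gk n (\<alpha> s - \<alpha> s') \<partial>lborel)
      \<le> cmod (F s) * (\<integral>s'. cmod (F s') * gk n (c * (s - s')) \<partial>lborel)"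
    proof (cases "s \<in> {a..b}")
      case False then show ?thesis by (simp add: Fsupp)
    next
      case True
      have "(\<integral>s'. cmod (F s') * gk n (\<alpha> s - \<alpha> s') \<partial>lborel) \<le> (\<integral>s'. cmod (F s') * gk n (c * (s - s')) \<partial>lborel)"
      proof (rule integral_mono')
        show "integrable lborel (\<lambda>s'. cmod (F s') * gk n (c * (s - s')))" by (rule intFg[OF n]) simp
        fix s'
        show "0 \<le> cmod (F s') * gk n (c * (s - s'))" using n by (simp add: gk_nonneg)
        show "cmod (F s') * gk n (\<alpha> s - \<alpha> s') \<le> cmod (F s') * gk n (c * (s - s'))"
        proof (cases "s' \<in> {a..b}")
          case False then show ?thesis by (simp add: Fsupp)
        next
          case True': True
          have "\<bar>c * (s - s')\<bar> \<le> \<bar>\<alpha> s - \<alpha> s'\<bar>" using sep[OF True True'] cpos by (simp add: abs_mult)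
          then show ?thesis by (intro mult_left_mono gk_mono n) auto
        qed
      qed
      then show ?thesis by (intro mult_left_mono) auto
    qed
  qed
  finally show ?thesis unfolding R_def .
qed


lemma amgm_F: "cmod (F s) * cmod (F s') \<le> ((cmod (F s))\<^sup>2 * indicator {a..b} s' + indicator {a..b} s * (cmod (F s'))\<^sup>2) / 2"
proof (cases "s \<in> {a..b} \<and> s' \<in> {a..b}")
  case True
  have "0 \<le> (cmod (F s) - cmod (F s'))\<^sup>2" by simp
  then show ?thesis using True by (simp add: power2_eq_square algebra_simps)
next
  case False
  then show ?thesis by (auto simp: Fsupp)
qed

lemma schur:
  fixes n :: real assumes n: "n > 0"
  shows "(\<integral>s. cmod (F s) * (\<integral>s'. cmod (F s') * gk n (c * (s - s')) \<partial>lborel) \<partial>lborel)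
     \<le> 2 * pi / c * (\<integral>s. (cmod (F s))\<^sup>2 \<partial>lborel)"
proof -
  define S where "S = (\<integral>s. (cmod (F s))\<^sup>2 \<partial>lborel)"
  define K where "K = n * sqrt (2*pi)"
  define ind where "ind = (indicator {a..b} :: real \<Rightarrow> real)"
  have indm[measurable]: "ind \<in> borel_measurable borel" unfolding ind_def by simp
  have ind01: "0 \<le> ind x" "ind x \<le> 1" for x unfolding ind_def by (auto simp: indicator_def)
  have indint: "integrable lborel ind" unfolding ind_def
    by (intro integrable_real_indicator) (auto simp: emeasure_lborel_Icc_eq)
  define H where "H s = (\<integral>s'. (cmod (F s'))\<^sup>2 * gk n (c * (s - s')) \<partial>lborel)" for s
  have Hm[measurable]: "H \<in> borel_measurable borel" unfolding H_def[abs_def] by measurable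
  have Sn: "0 \<le> S" unfolding S_def by simp
  have Kn: "0 \<le> K" unfolding K_def using n by simp
  have kint: "integrable lborel (\<lambda>s'. gk n (c * (s - s')))" for s using gk_integral(1)[OF n cpos] .
  have kint2: "integrable lborel (\<lambda>s'. v * gk n (c * (s - s')))" for s v using kint[of s] by simp
  have F2k: "integrable lborel (\<lambda>s'. (cmod (F s'))\<^sup>2 * gk n (c * (s - s')))" for s
  proof (rule Bochner_Integration.integrable_bound)
    show "integrable lborel (\<lambda>s'. K * (cmod (F s'))\<^sup>2)" using F2 by simp
    show "AE s' in lborel. norm ((cmod (F s'))\<^sup>2 * gk n (c * (s - s'))) \<le> norm (K * (cmod (F s'))\<^sup>2)"
      using n by (intro AE_I2) (auto simp: K_def abs_mult gk_nonneg gk_le mult.commute[of "_\<^sup>2"] intro!: mult_right_mono)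
  qed measurable
  have indk: "integrable lborel (\<lambda>s'. ind s' * gk n (c * (s - s')))" for s
  proof (rule Bochner_Integration.integrable_bound)
    show "integrable lborel (\<lambda>s'. K * ind s')" using indint by simp
    show "AE s' in lborel. norm (ind s' * gk n (c * (s - s'))) \<le> norm (K * ind s')"
      using n ind01 by (intro AE_I2) (auto simp: K_def abs_mult gk_nonneg gk_le mult.commute[of "ind _"] intro!: mult_right_mono)
  qed measurable
  have Hb: "0 \<le> H s \<and> H s \<le> K * S" for s
  proof
    show "0 \<le> H s" unfolding H_def using n by (intro integral_nonneg_AE AE_I2) (auto simp: gk_nonneg)
    have "H s \<le> (\<integral>s'. K * (cmod (F s'))\<^sup>2 \<partial>lborel)" unfolding H_def
      using n F2 by (intro integral_mono') (auto simp: K_def gk_nonneg gk_le mult.commute[of "_\<^sup>2"] intro!: mult_right_mono)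
    then show "H s \<le> K * S" by (simp add: S_def)
  qed
  have indH: "integrable lborel (\<lambda>s. ind s * H s)"
  proof (rule Bochner_Integration.integrable_bound)
    show "integrable lborel (\<lambda>s. (K * S) * ind s)" using indint by simp
    show "AE s in lborel. norm (ind s * H s) \<le> norm ((K * S) * ind s)"
      using Hb ind01 Sn Kn by (intro AE_I2) (auto simp: abs_mult mult.commute[of "ind _"] intro!: mult_right_mono)
  qed measurable
  have pw: "cmod (F s) * (\<integral>s'. cmod (F s') * gk n (c * (s - s')) \<partial>lborel)
        \<le> pi / c * (cmod (F s))\<^sup>2 + ind s * H s / 2" for s
  proof -
    have "cmod (F s) * (\<integral>s'. cmod (F s') * gk n (c * (s - s')) \<partial>lborel)
        = (\<integral>s'. cmod (F s) * (cmod (F s') * gk n (c * (s - s'))) \<partial>lborel)"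
      by (rule integral_mult_right_zero[symmetric])
    also have "\<dots> \<le> (\<integral>s'. ((cmod (F s))\<^sup>2 / 2) * (ind s' * gk n (c * (s - s'))) + (ind s / 2) * ((cmod (F s'))\<^sup>2 * gk n (c * (s - s'))) \<partial>lborel)"
    proof (rule integral_mono')
      show "integrable lborel (\<lambda>s'. ((cmod (F s))\<^sup>2 / 2) * (ind s' * gk n (c * (s - s'))) + (ind s / 2) * ((cmod (F s'))\<^sup>2 * gk n (c * (s - s'))))"
        using indk F2k by simp
      fix s'
      show "0 \<le> ((cmod (F s))\<^sup>2 / 2) * (ind s' * gk n (c * (s - s'))) + (ind s / 2) * ((cmod (F s'))\<^sup>2 * gk n (c * (s - s')))"
        using n ind01 by (simp add: gk_nonneg)
      have "cmod (F s) * (cmod (F s') * gk n (c * (s - s'))) = (cmod (F s) * cmod (F s')) * gk n (c * (s - s'))"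
        by simp
      also have "\<dots> \<le> (((cmod (F s))\<^sup>2 * ind s' + ind s * (cmod (F s'))\<^sup>2) / 2) * gk n (c * (s - s'))"
        using amgm_F[of s s'] n unfolding ind_def by (intro mult_right_mono) (auto simp: gk_nonneg)
      also have "\<dots> = ((cmod (F s))\<^sup>2 / 2) * (ind s' * gk n (c * (s - s'))) + (ind s / 2) * ((cmod (F s'))\<^sup>2 * gk n (c * (s - s')))"
        by (simp add: field_simps)
      finally show "cmod (F s) * (cmod (F s') * gk n (c * (s - s'))) \<le> \<dots>" .
    qed
    also have "\<dots> = ((cmod (F s))\<^sup>2 / 2) * (\<integral>s'. ind s' * gk n (c * (s - s')) \<partial>lborel) + (ind s / 2) * H s"
      using indk F2k unfolding H_def by simp
    also have "\<dots> \<le> ((cmod (F s))\<^sup>2 / 2) * (2 * pi / c) + (ind s / 2) * H s"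
    proof -
      have "(\<integral>s'. ind s' * gk n (c * (s - s')) \<partial>lborel) \<le> (\<integral>s'. gk n (c * (s - s')) \<partial>lborel)"
        using kint n ind01 by (intro integral_mono') (auto simp: gk_nonneg intro!: mult_left_le_one_le)
      then have "(\<integral>s'. ind s' * gk n (c * (s - s')) \<partial>lborel) \<le> 2 * pi / c" using gk_integral(2)[OF n cpos, of s] by simp
      then have "((cmod (F s))\<^sup>2 / 2) * (\<integral>s'. ind s' * gk n (c * (s - s')) \<partial>lborel) \<le> ((cmod (F s))\<^sup>2 / 2) * (2 * pi / c)"
        by (intro mult_left_mono) auto
      then show ?thesis by simp
    qed
    also have "\<dots> = pi / c * (cmod (F s))\<^sup>2 + ind s * H s / 2" by (simp add: field_simps)
    finally show ?thesis .
  qed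
  have "(\<integral>s. cmod (F s) * (\<integral>s'. cmod (F s') * gk n (c * (s - s')) \<partial>lborel) \<partial>lborel)
     \<le> (\<integral>s. pi / c * (cmod (F s))\<^sup>2 + ind s * H s / 2 \<partial>lborel)"
  proof (rule integral_mono')
    show "integrable lborel (\<lambda>s. pi / c * (cmod (F s))\<^sup>2 + ind s * H s / 2)"
      using F2 indH by simp
    fix s show "0 \<le> pi / c * (cmod (F s))\<^sup>2 + ind s * H s / 2" using cpos Hb ind01 by simp
  qed (rule pw)
  also have "\<dots> = pi / c * S + (\<integral>s. ind s * H s \<partial>lborel) / 2"
    using F2 indH by (simp add: S_def)
  finally have A: "(\<integral>s. cmod (F s) * (\<integral>s'. cmod (F s') * gk n (c * (s - s')) \<partial>lborel) \<partial>lborel)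
     \<le> pi / c * S + (\<integral>s. ind s * H s \<partial>lborel) / 2" .
  have B: "(\<integral>s. ind s * H s \<partial>lborel) \<le> 2 * pi / c * S"
  proof -
    have int: "integrable (lborel \<Otimes>\<^sub>M lborel) (\<lambda>(x, y). ind y * ((cmod (F x))\<^sup>2 * gk n (c * (y - x))))"
    proof (rule Bochner_Integration.integrable_bound)
      show "integrable (lborel \<Otimes>\<^sub>M lborel) (\<lambda>p. (K * (cmod (F (fst p)))\<^sup>2) * ind (snd p))"
        using F2 indint by (intro integrable_prod_lborel) auto
      show "AE p in lborel \<Otimes>\<^sub>M lborel. norm ((\<lambda>(x, y). ind y * ((cmod (F x))\<^sup>2 * gk n (c * (y - x)))) p) \<le> norm ((K * (cmod (F (fst p)))\<^sup>2) * ind (snd p))"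
      proof (intro AE_I2, clarify)
        fix x y
        have "(cmod (F x))\<^sup>2 * gk n (c * (y - x)) \<le> K * (cmod (F x))\<^sup>2"
          using n by (auto simp: K_def gk_le mult.commute[of "_\<^sup>2"] intro!: mult_right_mono)
        then show "norm (ind y * ((cmod (F x))\<^sup>2 * gk n (c * (y - x)))) \<le> norm ((K * (cmod (F (fst (x, y))))\<^sup>2) * ind (snd (x, y)))"
          using ind01[of y] n Kn by (auto simp: abs_mult gk_nonneg mult.commute[of "ind _"] intro!: mult_right_mono)
      qed
    qed measurable
    have "(\<integral>s. ind s * H s \<partial>lborel) = (\<integral>y. (\<integral>x. ind y * ((cmod (F x))\<^sup>2 * gk n (c * (y - x))) \<partial>lborel) \<partial>lborel)"
      unfolding H_def by simp
    also have "\<dots> = (\<integral>x. (\<integral>y. ind y * ((cmod (F x))\<^sup>2 * gk n (c * (y - x))) \<partial>lborel) \<partial>lborel)"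
      using lborel_pair.Fubini_integral[OF int] by simp
    also have "\<dots> \<le> (\<integral>x. 2 * pi / c * (cmod (F x))\<^sup>2 \<partial>lborel)"
    proof (rule integral_mono')
      show "integrable lborel (\<lambda>x. 2 * pi / c * (cmod (F x))\<^sup>2)" using F2 by simp
      fix x
      show "0 \<le> 2 * pi / c * (cmod (F x))\<^sup>2" using cpos by simp
      have "(\<integral>y. ind y * ((cmod (F x))\<^sup>2 * gk n (c * (y - x))) \<partial>lborel)
          = (cmod (F x))\<^sup>2 * (\<integral>y. ind y * gk n (c * (x - y)) \<partial>lborel)"
      proof -
        have "(\<lambda>y. ind y * ((cmod (F x))\<^sup>2 * gk n (c * (y - x)))) = (\<lambda>y. (cmod (F x))\<^sup>2 * (ind y * gk n (c * (x - y))))"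
          using gk_even[of n "c * (x - _)"] by (auto simp: algebra_simps)
        then show ?thesis by simp
      qed
      also have "\<dots> \<le> (cmod (F x))\<^sup>2 * (\<integral>y. gk n (c * (x - y)) \<partial>lborel)"
        using kint n ind01 by (intro mult_left_mono integral_mono') (auto simp: gk_nonneg intro!: mult_left_le_one_le)
      also have "\<dots> = 2 * pi / c * (cmod (F x))\<^sup>2" using gk_integral(2)[OF n cpos, of x] by simp
      finally show "(\<integral>y. ind y * ((cmod (F x))\<^sup>2 * gk n (c * (y - x))) \<partial>lborel) \<le> 2 * pi / c * (cmod (F x))\<^sup>2" .
    qed
    also have "\<dots> = 2 * pi / c * S" by (simp add: S_def)
    finally show ?thesis .
  qed
  have e: "2 * pi / c * S = 2 * (pi / c * S)" by simp
  have lin: "\<And>X Y P :: real. X \<le> P + Y/2 \<Longrightarrow> Y \<le> 2*P \<Longrightarrow> X \<le> 2*P" by linarith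
  show ?thesis unfolding S_def[symmetric] e by (rule lin[OF A B[unfolded e]])
qed


lemma L2_bound:
  shows "integrable lborel (\<lambda>t. (cmod (Osc t))\<^sup>2)"
    and "(\<integral>t. (cmod (Osc t))\<^sup>2 \<partial>lborel) \<le> 2 * pi / c * (\<integral>s. (cmod (F s))\<^sup>2 \<partial>lborel)"
proof -
  define B where "B = 2 * pi / c * (\<integral>s. (cmod (F s))\<^sup>2 \<partial>lborel)"
  define M where "M = (\<integral>s. cmod (F s) \<partial>lborel)"
  define f where "f i t = exp (-(t/real (Suc i))\<^sup>2/2) * (cmod (Osc t))\<^sup>2" for i t
  have fm[measurable]: "f i \<in> borel_measurable borel" for i unfolding f_def[abs_def] by measurable
  have fint: "integrable lborel (f i)" for i
  proof (rule Bochner_Integration.integrable_bound)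
    show "integrable lborel (\<lambda>t. M\<^sup>2 * exp (-(t/real (Suc i))\<^sup>2/2))"
      using gauss_integrable[of "real (Suc i)"] by simp
    show "AE t in lborel. norm (f i t) \<le> norm (M\<^sup>2 * exp (-(t/real (Suc i))\<^sup>2/2))"
    proof (intro AE_I2)
      fix t
      have "(cmod (Osc t))\<^sup>2 \<le> M\<^sup>2" unfolding M_def by (intro power_mono O_bound) simp
      then show "norm (f i t) \<le> norm (M\<^sup>2 * exp (-(t/real (Suc i))\<^sup>2/2))"
        unfolding f_def by (simp add: abs_mult mult.commute[of "exp _"] mult_right_mono)
    qed
  qed simp
  have fmono: "f i t \<le> f (Suc i) t" for i t
  proof -
    have "(t/real (Suc (Suc i)))\<^sup>2 \<le> (t/real (Suc i))\<^sup>2"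
      by (simp add: power_divide frac_le)
    then show ?thesis unfolding f_def by (intro mult_right_mono) auto
  qed
  have flim: "(\<lambda>i. f i t) \<longlonglongrightarrow> (cmod (Osc t))\<^sup>2" for t
  proof -
    have "(\<lambda>i. t / real (Suc i)) \<longlonglongrightarrow> 0"
      using LIMSEQ_Suc[OF lim_const_over_n[of t]] by simp
    then have "(\<lambda>i. exp (-(t/real (Suc i))\<^sup>2/2) * (cmod (Osc t))\<^sup>2) \<longlonglongrightarrow> exp (-(0)\<^sup>2/2) * (cmod (Osc t))\<^sup>2"
      by (intro tendsto_intros) auto
    then show ?thesis unfolding f_def by simp
  qed
  have fB: "integral\<^sup>L lborel (f i) \<le> B" for i
  proof -
    have "integral\<^sup>L lborel (f i) \<le> (\<integral>s. cmod (F s) * (\<integral>s'. cmod (F s') * gk (real (Suc i)) (c * (s - s')) \<partial>lborel) \<partial>lborel)"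
      unfolding f_def by (rule J_le) simp
    also have "\<dots> \<le> B" unfolding B_def by (rule schur) simp
    finally show ?thesis .
  qed
  have inc: "incseq (\<lambda>i. integral\<^sup>L lborel (f i))"
    by (rule incseq_SucI, rule integral_mono[OF fint fint fmono])
  obtain L where L: "(\<lambda>i. integral\<^sup>L lborel (f i)) \<longlonglongrightarrow> L" "\<forall>i. integral\<^sup>L lborel (f i) \<le> L"
    using incseq_convergent[OF inc] fB by blast
  have mono: "AE t in lborel. mono (\<lambda>n. f n t)"
    by (intro AE_I2 incseq_SucI fmono) 
  show "integrable lborel (\<lambda>t. (cmod (Osc t))\<^sup>2)"
    by (rule integrable_monotone_convergence[OF fint mono AE_I2[OF flim] L(1)]) measurable
  have "(\<integral>t. (cmod (Osc t))\<^sup>2 \<partial>lborel) = L"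
    by (rule integral_monotone_convergence[OF fint mono AE_I2[OF flim] L(1)]) measurable
  also have "L \<le> B" using L(1) fB by (intro LIMSEQ_le_const2) auto
  finally show "(\<integral>t. (cmod (Osc t))\<^sup>2 \<partial>lborel) \<le> 2 * pi / c * (\<integral>s. (cmod (F s))\<^sup>2 \<partial>lborel)"
    unfolding B_def .
qed


lemma L1_bound:
  assumes ab: "a < b"
  shows "(\<integral>s. cmod (F s) \<partial>lborel) \<le> sqrt (b - a) * sqrt (\<integral>s. (cmod (F s))\<^sup>2 \<partial>lborel)"
proof -
  define S where "S = (\<integral>s. (cmod (F s))\<^sup>2 \<partial>lborel)"
  have Sn: "0 \<le> S" unfolding S_def by simp
  have indint: "integrable lborel (indicator {a..b} :: real \<Rightarrow> real)"
    by (intro integrable_real_indicator) (auto simp: emeasure_lborel_Icc_eq)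
  have gen: "(\<integral>s. cmod (F s) \<partial>lborel) \<le> (l * S + (b - a) / l) / 2" if l: "l > 0" for l
  proof -
    have "(\<integral>s. cmod (F s) \<partial>lborel) \<le> (\<integral>s. (l * (cmod (F s))\<^sup>2 + indicator {a..b} s / l) / 2 \<partial>lborel)"
    proof (rule integral_mono')
      show "integrable lborel (\<lambda>s. (l * (cmod (F s))\<^sup>2 + indicator {a..b} s / l) / 2)"
        using F2 indint by simp
      fix s
      show "0 \<le> (l * (cmod (F s))\<^sup>2 + indicator {a..b} s / l) / 2" using l by simp
      show "cmod (F s) \<le> (l * (cmod (F s))\<^sup>2 + indicator {a..b} s / l) / 2"
      proof (cases "s \<in> {a..b}")
        case True
        have "0 \<le> (l * cmod (F s) - 1)\<^sup>2" by simp
        then have "2 * l * cmod (F s) \<le> l\<^sup>2 * (cmod (F s))\<^sup>2 + 1" by (simp add: power2_eq_square algebra_simps)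
        then have "2 * l * cmod (F s) / l \<le> (l\<^sup>2 * (cmod (F s))\<^sup>2 + 1) / l" using l by (intro divide_right_mono) auto
        then show ?thesis using True l by (simp add: power2_eq_square field_simps)
      qed (simp add: Fsupp)
    qed
    also have "\<dots> = (l * S + (b - a) / l) / 2" using F2 indint ab by (simp add: S_def)
    finally show ?thesis .
  qed
  show ?thesis
  proof (cases "S = 0")
    case True
    have "AE s in lborel. (cmod (F s))\<^sup>2 = 0"
      using True F2 unfolding S_def by (subst integral_nonneg_eq_0_iff_AE[symmetric]) auto
    then have "AE s in lborel. cmod (F s) = 0" by eventually_elim simp
    then have "(\<integral>s. cmod (F s) \<partial>lborel) = 0"
      by (rule integral_eq_zero_AE)
    then show ?thesis using True ab unfolding S_def by simp
  next
    case False
    then have Sp: "S > 0" using Sn by simp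
    define l where "l = sqrt (b - a) / sqrt S"
    have l: "l > 0" unfolding l_def using Sp ab by simp
    have sS: "sqrt S * sqrt S = S" using Sn by simp
    have sD: "sqrt (b - a) * sqrt (b - a) = b - a" using ab by simp
    have "l * S = sqrt (b - a) * sqrt S" unfolding l_def
      by (metis sS Sp divide_eq_eq mult.assoc mult.commute real_sqrt_gt_0_iff times_divide_eq_left order_less_irrefl)
    moreover have "(b - a) / l = sqrt (b - a) * sqrt S" unfolding l_def
      using sD ab Sp by (simp add: field_simps)
    ultimately have "(l * S + (b - a) / l) / 2 = sqrt (b - a) * sqrt S" by simp
    then show ?thesis using gen[OF l] unfolding S_def by simp
  qed
qed


lemma Lq_bound:
  fixes q :: real
  assumes ab: "a < b" and q: "2 \<le> q"
  shows "integrable lborel (\<lambda>t. (cmod (Osc t)) powr q)"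
    and "(\<integral>t. (cmod (Osc t)) powr q \<partial>lborel) powr (1/q)
       \<le> (b - a) powr (1/2 - 1/q) * (2 * pi / c) powr (1/q) * sqrt (\<integral>s. (cmod (F s))\<^sup>2 \<partial>lborel)"
proof -
  define S where "S = (\<integral>s. (cmod (F s))\<^sup>2 \<partial>lborel)"
  define D where "D = b - a"
  define E where "E = 2 * pi / c"
  define M where "M = sqrt D * sqrt S"
  have Sn: "0 \<le> S" unfolding S_def by simp
  have Dp: "0 < D" unfolding D_def using ab by simp
  have Ep: "0 < E" unfolding E_def using cpos by simp
  have Mn: "0 \<le> M" unfolding M_def using Sn Dp by simp
  have OM: "cmod (Osc t) \<le> M" for t
    using O_bound[of t] L1_bound[OF ab] unfolding M_def D_def S_def by linarith
  have pw: "(cmod (Osc t)) powr q \<le> M powr (q - 2) * (cmod (Osc t))\<^sup>2" for t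
  proof (cases "cmod (Osc t) = 0")
    case True then show ?thesis using q by simp
  next
    case False
    have "(cmod (Osc t)) powr q = (cmod (Osc t)) powr ((q - 2) + 2)" by simp
    also have "\<dots> = (cmod (Osc t)) powr (q - 2) * (cmod (Osc t)) powr 2"
      by (rule powr_add)
    finally have "(cmod (Osc t)) powr q = (cmod (Osc t)) powr (q - 2) * (cmod (Osc t))\<^sup>2" by simp
    also have "\<dots> \<le> M powr (q - 2) * (cmod (Osc t))\<^sup>2"
      using q OM[of t] by (simp add: powr_mono2 mult_right_mono)
    finally show ?thesis .
  qed
  have int2: "integrable lborel (\<lambda>t. (cmod (Osc t))\<^sup>2)" by (rule L2_bound(1))
  show intq: "integrable lborel (\<lambda>t. (cmod (Osc t)) powr q)"
  proof (rule Bochner_Integration.integrable_bound)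
    show "integrable lborel (\<lambda>t. M powr (q - 2) * (cmod (Osc t))\<^sup>2)" using int2 by simp
    show "AE t in lborel. norm ((cmod (Osc t)) powr q) \<le> norm (M powr (q - 2) * (cmod (Osc t))\<^sup>2)"
      using pw by (intro AE_I2) simp
  qed measurable
  have "(\<integral>t. (cmod (Osc t)) powr q \<partial>lborel) \<le> (\<integral>t. M powr (q - 2) * (cmod (Osc t))\<^sup>2 \<partial>lborel)"
    using int2 pw by (intro integral_mono') auto
  also have "\<dots> = M powr (q - 2) * (\<integral>t. (cmod (Osc t))\<^sup>2 \<partial>lborel)" by simp
  also have "\<dots> \<le> M powr (q - 2) * (E * S)"
    using L2_bound(2) unfolding E_def S_def by (intro mult_left_mono) auto
  finally have I: "(\<integral>t. (cmod (Osc t)) powr q \<partial>lborel) \<le> M powr (q - 2) * (E * S)" .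
  have "(\<integral>t. (cmod (Osc t)) powr q \<partial>lborel) powr (1/q) \<le> (M powr (q - 2) * (E * S)) powr (1/q)"
    using I q by (intro powr_mono2) auto
  also have "\<dots> = M powr ((q - 2) / q) * E powr (1/q) * S powr (1/q)"
    by (simp add: powr_mult powr_powr)
  also have "M powr ((q - 2) / q) = D powr (1/2 - 1/q) * S powr (1/2 - 1/q)"
  proof -
    have "M = D powr (1/2) * S powr (1/2)" unfolding M_def using Sn Dp by (simp add: powr_half_sqrt)
    then have "M powr ((q - 2) / q) = D powr (1/2 * ((q - 2) / q)) * S powr (1/2 * ((q - 2) / q))"
      by (simp add: powr_mult powr_powr)
    moreover have "1/2 * ((q - 2) / q) = 1/2 - 1/q" using q by (simp add: field_simps)
    ultimately show ?thesis by simp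
  qed
  also have "D powr (1/2 - 1/q) * S powr (1/2 - 1/q) * E powr (1/q) * S powr (1/q)
      = D powr (1/2 - 1/q) * E powr (1/q) * S powr (1/2)"
    by (simp add: powr_add[symmetric] mult_ac)
  also have "\<dots> = D powr (1/2 - 1/q) * E powr (1/q) * sqrt S" using Sn by (simp add: powr_half_sqrt)
  finally show "(\<integral>t. (cmod (Osc t)) powr q \<partial>lborel) powr (1/q)
       \<le> (b - a) powr (1/2 - 1/q) * (2 * pi / c) powr (1/q) * sqrt (\<integral>s. (cmod (F s))\<^sup>2 \<partial>lborel)"
    unfolding D_def E_def S_def .
qed

end



lemma pow_half: "2 powr (- real_of_int k) * 2 powr (real_of_int k - 1) = 1/2"
proof -
  have "2 powr (- real_of_int k) * 2 powr (real_of_int k - 1) = 2 powr (- real_of_int k + (real_of_int k - 1))"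
    by (rule powr_add[symmetric])
  also have "\<dots> = 2 powr (-1)" by simp
  also have "\<dots> = 1/2" by (simp add: powr_minus)
  finally show ?thesis .
qed

lemma pow_two: "2 powr (- real_of_int k) * 2 powr (real_of_int k + 1) = 2"
proof -
  have "2 powr (- real_of_int k) * 2 powr (real_of_int k + 1) = 2 powr (- real_of_int k + (real_of_int k + 1))"
    by (rule powr_add[symmetric])
  also have "\<dots> = 2" by simp
  finally show ?thesis .
qed

lemma bump_cont: assumes "bump Phi" shows "continuous_on UNIV Phi"
proof -
  have "Phi differentiable (at x)" for x
    using assms unfolding bump_def smooth_on_def by (metis funpow_0 UNIV_I)
  then show ?thesis
    by (intro continuous_at_imp_continuous_on ballI differentiable_imp_continuous_within)
qed

lemma psik_cont: assumes "bump Phi" shows "continuous_on UNIV (psik Phi k)"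
proof -
  have c: "continuous_on UNIV Phi" by (rule bump_cont[OF assms])
  have "continuous_on UNIV (\<lambda>s. Phi (2 powr (- real_of_int k) * s) - Phi (2 * (2 powr (- real_of_int k) * s)))"
    by (intro continuous_intros continuous_on_compose2[OF c]) auto
  then show ?thesis unfolding psik_def[abs_def] psi_def .
qed

lemma psik_meas[measurable]: assumes "bump Phi" shows "psik Phi k \<in> borel_measurable borel"
  by (rule borel_measurable_continuous_onI[OF psik_cont[OF assms]])

lemma psik_abs: assumes "bump Phi" shows "\<bar>psik Phi k s\<bar> \<le> 1"
proof -
  have "0 \<le> Phi x \<and> Phi x \<le> 1" for x using assms unfolding bump_def by blast
  then show ?thesis unfolding psik_def psi_def
    by (smt (verit))
qed

lemma psik_supp:
  assumes "bump Phi" and s: "s > 0" and ns: "s \<notin> {2 powr (real_of_int k - 1) .. 2 powr (real_of_int k + 1)}"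
  shows "psik Phi k s = 0"
proof -
  define y where "y = 2 powr (- real_of_int k) * s"
  have ypos: "y > 0" unfolding y_def using s by simp
  have e1: "2 powr (- real_of_int k) * 2 powr (real_of_int k - 1) = 1/2" by (rule pow_half)
  have e2: "2 powr (- real_of_int k) * 2 powr (real_of_int k + 1) = 2" by (rule pow_two)
  have pk: "2 powr (- real_of_int k) > 0" by simp
  from ns have "s < 2 powr (real_of_int k - 1) \<or> s > 2 powr (real_of_int k + 1)" by auto
  then have "y < 1/2 \<or> y > 2"
  proof
    assume "s < 2 powr (real_of_int k - 1)"
    then have "2 powr (- real_of_int k) * s < 2 powr (- real_of_int k) * 2 powr (real_of_int k - 1)"
      using pk by simp
    then show ?thesis unfolding y_def e1 by simp
  next
    assume "s > 2 powr (real_of_int k + 1)"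
    then have "2 powr (- real_of_int k) * s > 2 powr (- real_of_int k) * 2 powr (real_of_int k + 1)"
      using pk by simp
    then show ?thesis unfolding y_def e2 by simp
  qed
  then show ?thesis
  proof
    assume "y < 1/2"
    then have "\<bar>y\<bar> \<le> 1" "\<bar>2*y\<bar> \<le> 1" using ypos by auto
    then show ?thesis using assms(1) unfolding psik_def psi_def y_def[symmetric] bump_def by auto
  next
    assume "y > 2"
    then have "\<bar>y\<bar> > 2" "\<bar>2*y\<bar> > 2" by auto
    then show ?thesis using assms(1) unfolding psik_def psi_def y_def[symmetric] bump_def by auto
  qed
qed

lemma smooth_deriv:
  assumes "smooth_on {0<..} phi" and "x > 0"
  shows "(phi has_real_derivative deriv phi x) (at x)"
proof -
  have "\<forall>x\<in>{0<..}. ((deriv ^^ 0) phi) differentiable (at x)" using assms(1) unfolding smooth_on_def by blast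
  then have "phi differentiable (at x)" using assms(2) by simp
  then show ?thesis by (simp add: DERIV_deriv_iff_real_differentiable)
qed

lemma smooth_cont:
  assumes "smooth_on {0<..} phi"
  shows "continuous_on {0<..} phi"
  using smooth_deriv[OF assms]
  by (intro continuous_at_imp_continuous_on ballI) (auto intro: DERIV_isCont)

lemma powr_theta: fixes \<theta> e :: real assumes "1/2 \<le> \<theta>" "\<theta> \<le> 2" shows "2 powr (- \<bar>e\<bar>) \<le> \<theta> powr e"
proof -
  have tp: "\<theta> > 0" using assms by simp
  have l1: "ln \<theta> \<le> ln 2" using assms tp by simp
  have l2: "- ln 2 \<le> ln \<theta>"
  proof -
    have "ln (1/2) \<le> ln \<theta>" using assms by (subst ln_le_cancel_iff) auto
    then show ?thesis by (simp add: ln_div)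
  qed
  have "\<bar>e * ln \<theta>\<bar> \<le> \<bar>e\<bar> * ln 2"
    unfolding abs_mult using l1 l2 by (intro mult_left_mono) auto
  then have "- \<bar>e\<bar> * ln 2 \<le> e * ln \<theta>" by linarith
  then have "exp (- \<bar>e\<bar> * ln 2) \<le> exp (e * ln \<theta>)" by simp
  then show ?thesis using tp by (simp add: powr_def mult.commute)
qed

lemma rpowr_lower:
  assumes "2 powr (real_of_int k - 1) \<le> r" "r \<le> 2 powr (real_of_int k + 1)"
  shows "2 powr (- \<bar>e\<bar>) * 2 powr (real_of_int k * e) \<le> r powr e"
proof -
  define \<theta> where "\<theta> = 2 powr (- real_of_int k) * r"
  have e1: "2 powr (- real_of_int k) * 2 powr (real_of_int k - 1) = 1/2" by (rule pow_half)
  have e2: "2 powr (- real_of_int k) * 2 powr (real_of_int k + 1) = 2" by (rule pow_two)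
  have pk: "2 powr (- real_of_int k) > 0" by simp
  have t1: "1/2 \<le> \<theta>" unfolding \<theta>_def e1[symmetric] by (rule mult_left_mono[OF assms(1) less_imp_le[OF pk]])
  have "\<theta> \<le> 2 powr (- real_of_int k) * 2 powr (real_of_int k + 1)" unfolding \<theta>_def by (rule mult_left_mono[OF assms(2) less_imp_le[OF pk]])
  then have t2: "\<theta> \<le> 2" unfolding e2 .
  have r: "r = 2 powr (real_of_int k) * \<theta>" unfolding \<theta>_def
    by (simp add: powr_add[symmetric] mult.assoc[symmetric])
  have "r powr e = 2 powr (real_of_int k * e) * \<theta> powr e"
    unfolding r by (simp add: powr_mult powr_powr)
  then show ?thesis using powr_theta[OF t1 t2, of e] by (simp add: mult.commute mult_left_mono)
qed




lemma deriv_lower: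
  assumes h1: "H1 phi m1" and h2: "H2 phi m2"
  obtains c0 where "c0 > 0" "\<And>k r. 2 powr (real_of_int k - 1) \<le> r \<Longrightarrow> r \<le> 2 powr (real_of_int k + 1)
       \<Longrightarrow> c0 * 2 powr (real_of_int k * (mk m1 m2 k - 1)) \<le> \<bar>deriv phi r\<bar>"
proof -
  from h1 obtain c1 C1 where c1: "c1 > 0" and l1: "\<And>r. r \<ge> 1 \<Longrightarrow> c1 * r powr (m1 - 1) \<le> \<bar>deriv phi r\<bar>"
    unfolding H1_def by blast
  from h2 obtain c2 C2 where c2: "c2 > 0" and l2: "\<And>r. 0 < r \<Longrightarrow> r < 1 \<Longrightarrow> c2 * r powr (m2 - 1) \<le> \<bar>deriv phi r\<bar>"
    unfolding H2_def by blast
  define c0 where "c0 = min c1 c2 * 2 powr (-(\<bar>m1 - 1\<bar> + \<bar>m2 - 1\<bar>))"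
  have c0p: "c0 > 0" unfolding c0_def using c1 c2 by simp
  have c0_1: "c0 \<le> c1 * 2 powr (- \<bar>m1 - 1\<bar>)" unfolding c0_def
    using c1 c2 by (intro mult_mono) auto
  have c0_2: "c0 \<le> c2 * 2 powr (- \<bar>m2 - 1\<bar>)" unfolding c0_def
    using c1 c2 by (intro mult_mono) auto
  have c0_3: "c0 \<le> c1 * 2 powr (- \<bar>m2 - 1\<bar>)" unfolding c0_def
    using c1 c2 by (intro mult_mono) auto
  show ?thesis
  proof (rule that[OF c0p])
    fix k r assume r1: "2 powr (real_of_int k - 1) \<le> r" and r2: "r \<le> 2 powr (real_of_int k + 1)"
    have rpos: "r > 0" using r1 by (smt (verit) powr_gt_zero)
    show "c0 * 2 powr (real_of_int k * (mk m1 m2 k - 1)) \<le> \<bar>deriv phi r\<bar>"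
    proof (cases "r \<ge> 1")
      case True
      show ?thesis
      proof (cases "k \<ge> 0")
        case True
        have "c0 * 2 powr (real_of_int k * (m1 - 1)) \<le> c1 * 2 powr (- \<bar>m1 - 1\<bar>) * 2 powr (real_of_int k * (m1 - 1))"
          using c0_1 by (intro mult_right_mono) auto
        also have "\<dots> \<le> c1 * r powr (m1 - 1)"
          using rpowr_lower[OF r1 r2, of "m1 - 1"] c1 by (simp add: mult.assoc mult_left_mono)
        also have "\<dots> \<le> \<bar>deriv phi r\<bar>" using l1 \<open>r \<ge> 1\<close> by simp
        finally show ?thesis using True by (simp add: mk_def)
      next
        case False
        have "2 powr (real_of_int k + 1) \<le> 2 powr 0" using False by (subst powr_le_cancel_iff) auto
        then have r1': "r = 1" using r2 \<open>r \<ge> 1\<close> by simp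
        have k: "k = -1"
        proof -
          have "2 powr 0 \<le> 2 powr (real_of_int k + 1)" using r2 r1' by simp
          then have "0 \<le> real_of_int k + 1" by (subst (asm) powr_le_cancel_iff) auto
          then show ?thesis using False by linarith
        qed
        have kk: "real_of_int k * (m2 - 1) = 1 - m2" using k by simp
        have "c0 * 2 powr (real_of_int k * (m2 - 1)) \<le> c1 * 2 powr (- \<bar>m2 - 1\<bar>) * 2 powr (1 - m2)"
          unfolding kk by (rule mult_right_mono[OF c0_3]) simp
        also have "\<dots> = c1 * 2 powr (- \<bar>m2 - 1\<bar> + (1 - m2))" by (simp only: powr_add mult.assoc)
        also have "\<dots> \<le> c1 * 2 powr 0"
        proof -
          have x0: "- \<bar>m2 - 1\<bar> + (1 - m2) \<le> 0" by (simp add: abs_if)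
          have "2 powr (- \<bar>m2 - 1\<bar> + (1 - m2)) \<le> 2 powr 0"
            by (subst powr_le_cancel_iff) (use x0 in auto)
          then show ?thesis using c1 by (intro mult_left_mono) auto
        qed
        also have "\<dots> \<le> \<bar>deriv phi r\<bar>" using l1[of 1] r1' by simp
        finally show ?thesis using False by (simp add: mk_def)
      qed
    next
      case False
      show ?thesis
      proof (cases "k \<ge> 0")
        case True
        have k: "k = 0"
        proof (rule ccontr)
          assume "k \<noteq> 0"
          then have "0 \<le> real_of_int k - 1" using True by linarith
          then have "2 powr 0 \<le> 2 powr (real_of_int k - 1)" by (subst powr_le_cancel_iff) auto
          then show False using r1 False by simp
        qed
        have r1': "2 powr (real_of_int 0 - 1) \<le> r" "r \<le> 2 powr (real_of_int 0 + 1)" using r1 r2 k by auto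
        have "c0 * 2 powr (real_of_int k * (m1 - 1)) = c0" using k by simp
        also have "\<dots> \<le> c2 * 2 powr (- \<bar>m2 - 1\<bar>)" by (rule c0_2)
        also have "\<dots> = c2 * (2 powr (- \<bar>m2 - 1\<bar>) * 2 powr (real_of_int 0 * (m2 - 1)))" by simp
        also have "\<dots> \<le> c2 * r powr (m2 - 1)"
          using rpowr_lower[OF r1'(1) r1'(2), of "m2 - 1"] c2 by (intro mult_left_mono) auto
        also have "\<dots> \<le> \<bar>deriv phi r\<bar>" using l2 rpos False by simp
        finally show ?thesis using True by (simp add: mk_def)
      next
        case False
        have "c0 * 2 powr (real_of_int k * (m2 - 1)) \<le> c2 * 2 powr (- \<bar>m2 - 1\<bar>) * 2 powr (real_of_int k * (m2 - 1))"
          using c0_2 by (intro mult_right_mono) auto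
        also have "\<dots> \<le> c2 * r powr (m2 - 1)"
          using rpowr_lower[OF r1 r2, of "m2 - 1"] c2 by (simp add: mult.assoc mult_left_mono)
        also have "\<dots> \<le> \<bar>deriv phi r\<bar>" using l2 rpos \<open>\<not> r \<ge> 1\<close> by simp
        finally show ?thesis using False by (simp add: mk_def)
      qed
    qed
  qed
qed

lemma per_kf:
  fixes Phi phi :: "real \<Rightarrow> real" and m c0 :: real and k :: int and f :: "real \<Rightarrow> complex"
  assumes bp: "bump Phi" and sm: "smooth_on {0<..} phi" and c0: "c0 > 0"
    and lower: "\<And>r. 2 powr (real_of_int k - 1) \<le> r \<Longrightarrow> r \<le> 2 powr (real_of_int k + 1)
       \<Longrightarrow> c0 * 2 powr (real_of_int k * (m - 1)) \<le> \<bar>deriv phi r\<bar>"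
    and fL2: "L2pos f"
  shows "\<forall>q. 2 \<le> q \<longrightarrow> integrable lborel (\<lambda>t. (cmod (osc Phi phi k f t)) powr q)
          \<and> (LINT t|lborel. (cmod (osc Phi phi k f t)) powr q) powr (1 / q)
              \<le> ((3/2) powr (1/2 - 1/q) * (2 * pi / c0) powr (1/q)) * 2 powr ((1/2 - m / q) * real_of_int k) * L2norm_k Phi k f"
    and "\<forall>t. cmod (osc Phi phi k f t) \<le> sqrt (3/2) * 2 powr ((1/2) * real_of_int k) * L2norm_k Phi k f"
proof -
  define a where "a = 2 powr (real_of_int k - 1)"
  define b where "b = 2 powr (real_of_int k + 1)"
  define c where "c = c0 * 2 powr (real_of_int k * (m - 1))"
  define \<alpha> where "\<alpha> s = (if s \<in> {0<..} then phi s else 0)" for s :: real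
  define F where "F s = (if s > 0 then complex_of_real (psik Phi k s) * f s else 0)" for s
  have apos: "a > 0" unfolding a_def by simp
  have e2k: "b - a = 3/2 * 2 powr real_of_int k"
  proof -
    have "b = 2 * 2 powr real_of_int k" unfolding b_def by (simp add: powr_add)
    moreover have "a = 2 powr real_of_int k / 2" unfolding a_def by (simp add: powr_diff)
    ultimately show ?thesis by simp
  qed
  have "0 < 3/2 * 2 powr real_of_int k" by simp
  then have ab: "a < b" using e2k by linarith
  have cpos: "c > 0" unfolding c_def using c0 by simp
  have am: "\<alpha> \<in> borel_measurable borel"
    unfolding \<alpha>_def[abs_def] using smooth_cont[OF sm]
    by (intro borel_measurable_continuous_on_if) (auto intro: continuous_on_const)
  have fm: "(\<lambda>x. indicator {0<..} x *\<^sub>R f x) \<in> borel_measurable borel"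
    using fL2 unfolding L2pos_def set_borel_measurable_def by simp
  have Feq: "F = (\<lambda>s. complex_of_real (psik Phi k s) * (indicator {0<..} s *\<^sub>R f s))"
    unfolding F_def by (auto simp: indicator_def)
  have Fm: "F \<in> borel_measurable borel" unfolding Feq using psik_meas[OF bp] fm by measurable
  have Fsupp: "F s = 0" if "s \<notin> {a..b}" for s
  proof (cases "s > 0")
    case True then show ?thesis using psik_supp[OF bp True, of k] that unfolding F_def a_def b_def by simp
  qed (simp add: F_def)
  have f2: "integrable lborel (\<lambda>x. indicator {0<..} x *\<^sub>R (cmod (f x))\<^sup>2)"
    using fL2 unfolding L2pos_def set_integrable_def by blast
  have F2: "integrable lborel (\<lambda>s. (cmod (F s))\<^sup>2)"
  proof (rule Bochner_Integration.integrable_bound[OF f2])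
    show "(\<lambda>s. (cmod (F s))\<^sup>2) \<in> borel_measurable lborel" using Fm by simp
    show "AE x in lborel. norm ((cmod (F x))\<^sup>2) \<le> norm (indicator {0<..} x *\<^sub>R (cmod (f x))\<^sup>2)"
    proof (intro AE_I2)
      fix x
      have "cmod (F x) \<le> indicator {0<..} x * cmod (f x)"
        unfolding F_def using psik_abs[OF bp, of k x]
        by (auto simp: norm_mult indicator_def intro: mult_left_le_one_le)
      then have "(cmod (F x))\<^sup>2 \<le> (indicator {0<..} x * cmod (f x))\<^sup>2" by (intro power_mono) auto
      also have "\<dots> = indicator {0<..} x * (cmod (f x))\<^sup>2" by (simp add: indicator_def)
      finally show "norm ((cmod (F x))\<^sup>2) \<le> norm (indicator {0<..} x *\<^sub>R (cmod (f x))\<^sup>2)" by simp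
    qed
  qed
  have sep: "c * \<bar>s - s'\<bar> \<le> \<bar>\<alpha> s - \<alpha> s'\<bar>" if s: "s \<in> {a..b}" and s': "s' \<in> {a..b}" for s s'
  proof -
    have main: "c * \<bar>y - x\<bar> \<le> \<bar>\<alpha> y - \<alpha> x\<bar>" if xy: "x < y" "x \<in> {a..b}" "y \<in> {a..b}" for x y
    proof -
      have der: "\<And>z. x \<le> z \<Longrightarrow> z \<le> y \<Longrightarrow> (phi has_real_derivative deriv phi z) (at z)"
        using xy apos by (intro smooth_deriv[OF sm]) auto
      obtain z where z: "x < z" "z < y" "phi y - phi x = (y - x) * deriv phi z"
        using MVT2[OF xy(1) der] by blast
      have zab: "a \<le> z" "z \<le> b" using z xy by auto
      have "c \<le> \<bar>deriv phi z\<bar>" unfolding c_def using lower zab unfolding a_def b_def by simp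
      then have "c * \<bar>y - x\<bar> \<le> \<bar>deriv phi z\<bar> * \<bar>y - x\<bar>" by (intro mult_right_mono) auto
      also have "\<dots> = \<bar>phi y - phi x\<bar>" using z by (simp add: abs_mult)
      also have "\<dots> = \<bar>\<alpha> y - \<alpha> x\<bar>" using xy apos by (simp add: \<alpha>_def)
      finally show ?thesis .
    qed
    show ?thesis
    proof (cases s s' rule: linorder_cases)
      case less then show ?thesis using main[OF less s s'] by (simp add: abs_minus_commute)
    next
      case greater then show ?thesis using main[OF greater s' s] by simp
    qed simp
  qed
  note ctx = Fm am Fsupp F2 cpos sep
  have Oeq: "Osc F \<alpha> t = (\<integral>s. F s * exp (- \<i> * complex_of_real (t * \<alpha> s)) \<partial>lborel)" for t
    by (rule Osc_def[OF ctx])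
  have osc_eq: "osc Phi phi k f t = Osc F \<alpha> t" for t
    unfolding osc_def Oeq set_lebesgue_integral_def
    by (rule Bochner_Integration.integral_cong[OF refl]) (auto simp: F_def \<alpha>_def indicator_def)
  have L2eq: "L2norm_k Phi k f = sqrt (\<integral>s. (cmod (F s))\<^sup>2 \<partial>lborel)"
    unfolding L2norm_k_def set_lebesgue_integral_def
    by (rule arg_cong[where f=sqrt], rule Bochner_Integration.integral_cong[OF refl]) (auto simp: F_def indicator_def)
  define S where "S = (\<integral>s. (cmod (F s))\<^sup>2 \<partial>lborel)"
  have Sn: "0 \<le> S" unfolding S_def by simp
  show "\<forall>q. 2 \<le> q \<longrightarrow> integrable lborel (\<lambda>t. (cmod (osc Phi phi k f t)) powr q)
          \<and> (LINT t|lborel. (cmod (osc Phi phi k f t)) powr q) powr (1 / q)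
              \<le> ((3/2) powr (1/2 - 1/q) * (2 * pi / c0) powr (1/q)) * 2 powr ((1/2 - m / q) * real_of_int k) * L2norm_k Phi k f"
  proof (intro allI impI conjI)
    fix q :: real assume q: "2 \<le> q"
    show "integrable lborel (\<lambda>t. (cmod (osc Phi phi k f t)) powr q)"
      unfolding osc_eq by (rule Lq_bound(1)[OF ctx ab q])
    have B: "(LINT t|lborel. (cmod (osc Phi phi k f t)) powr q) powr (1 / q)
      \<le> (b - a) powr (1/2 - 1/q) * (2 * pi / c) powr (1/q) * sqrt S"
      unfolding osc_eq S_def by (rule Lq_bound(2)[OF ctx ab q])
    have E1: "(b - a) powr (1/2 - 1/q) = (3/2) powr (1/2 - 1/q) * 2 powr (real_of_int k * (1/2 - 1/q))"
      unfolding e2k by (simp only: powr_mult powr_powr)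
    have E2: "(2 * pi / c) powr (1/q) = (2 * pi / c0) powr (1/q) * 2 powr (- (real_of_int k * (m - 1)) / q)"
    proof -
      have "2 * pi / c = (2 * pi / c0) * inverse (2 powr (real_of_int k * (m - 1)))"
        unfolding c_def by (simp add: divide_inverse ac_simps)
      also have "inverse (2 powr (real_of_int k * (m - 1))) = 2 powr (- (real_of_int k * (m - 1)))"
        by (rule powr_minus[symmetric])
      finally have "2 * pi / c = (2 * pi / c0) * 2 powr (- (real_of_int k * (m - 1)))" .
      then show ?thesis by (simp only: powr_mult powr_powr divide_inverse mult_1)
    qed
    have E3: "2 powr (real_of_int k * (1/2 - 1/q)) * 2 powr (- (real_of_int k * (m - 1)) / q)
        = 2 powr ((1/2 - m / q) * real_of_int k)"
    proof -
      have "real_of_int k * (1/2 - 1/q) + - (real_of_int k * (m - 1)) / q = (1/2 - m / q) * real_of_int k"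
        using q by (simp add: field_simps)
      then show ?thesis by (simp add: powr_add[symmetric])
    qed
    have "(b - a) powr (1/2 - 1/q) * (2 * pi / c) powr (1/q) * sqrt S
        = ((3/2) powr (1/2 - 1/q) * (2 * pi / c0) powr (1/q)) * (2 powr (real_of_int k * (1/2 - 1/q)) * 2 powr (- (real_of_int k * (m - 1)) / q)) * sqrt S"
      unfolding E1 E2 by (simp add: ac_simps)
    also have "\<dots> = ((3/2) powr (1/2 - 1/q) * (2 * pi / c0) powr (1/q)) * 2 powr ((1/2 - m / q) * real_of_int k) * L2norm_k Phi k f"
      unfolding E3 L2eq S_def ..
    finally show "(LINT t|lborel. (cmod (osc Phi phi k f t)) powr q) powr (1 / q)
              \<le> ((3/2) powr (1/2 - 1/q) * (2 * pi / c0) powr (1/q)) * 2 powr ((1/2 - m / q) * real_of_int k) * L2norm_k Phi k f"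
      using B by simp
  qed
  show "\<forall>t. cmod (osc Phi phi k f t) \<le> sqrt (3/2) * 2 powr ((1/2) * real_of_int k) * L2norm_k Phi k f"
  proof
    fix t
    have "cmod (osc Phi phi k f t) \<le> (\<integral>s. cmod (F s) \<partial>lborel)"
      unfolding osc_eq by (rule O_bound[OF ctx])
    also have "\<dots> \<le> sqrt (b - a) * sqrt S" unfolding S_def by (rule L1_bound[OF ctx ab])
    also have "sqrt (b - a) = sqrt (3/2) * 2 powr ((1/2) * real_of_int k)"
    proof -
      have "sqrt (b - a) = (b - a) powr (1/2)" using ab by (simp add: powr_half_sqrt)
      also have "\<dots> = (3/2) powr (1/2) * 2 powr ((1/2) * real_of_int k)"
        unfolding e2k by (simp only: powr_mult powr_powr mult.commute[of "real_of_int k"])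
      also have "(3/2::real) powr (1/2) = sqrt (3/2)" by (simp add: powr_half_sqrt)
      finally show ?thesis .
    qed
    finally show "cmod (osc Phi phi k f t) \<le> sqrt (3/2) * 2 powr ((1/2) * real_of_int k) * L2norm_k Phi k f"
      unfolding L2eq S_def .
  qed
qed

theorem lemma2:
  fixes Phi phi :: "real \<Rightarrow> real" and m1 m2 :: real
  assumes "bump Phi"
    and "smooth_on {0<..} phi"
    and "H1 phi m1" and "H2 phi m2"
  shows "(\<forall>q::real. 2 \<le> q \<longrightarrow> (\<exists>C. \<forall>(k::int) (f::real \<Rightarrow> complex). L2pos f \<longrightarrow>
            integrable lborel (\<lambda>t. (cmod (osc Phi phi k f t)) powr q)
          \<and> (LINT t|lborel. (cmod (osc Phi phi k f t)) powr q) powr (1 / q)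
              \<le> C * 2 powr ((1/2 - mk m1 m2 k / q) * real_of_int k) * L2norm_k Phi k f))
       \<and> (\<exists>C. \<forall>(k::int) (f::real \<Rightarrow> complex). L2pos f \<longrightarrow>
            (AE t in lborel. cmod (osc Phi phi k f t)
               \<le> C * 2 powr ((1/2) * real_of_int k) * L2norm_k Phi k f))"
proof -
  obtain c0 where c0: "c0 > 0" and low: "\<And>k r. 2 powr (real_of_int k - 1) \<le> r \<Longrightarrow> r \<le> 2 powr (real_of_int k + 1)
       \<Longrightarrow> c0 * 2 powr (real_of_int k * (mk m1 m2 k - 1)) \<le> \<bar>deriv phi r\<bar>"
    using deriv_lower[OF assms(3,4)] by blast
  show ?thesis
  proof (intro conjI allI impI)
    fix q :: real assume q: "2 \<le> q"
    show "\<exists>C. \<forall>(k::int) (f::real \<Rightarrow> complex). L2pos f \<longrightarrow>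
            integrable lborel (\<lambda>t. (cmod (osc Phi phi k f t)) powr q)
          \<and> (LINT t|lborel. (cmod (osc Phi phi k f t)) powr q) powr (1 / q)
              \<le> C * 2 powr ((1/2 - mk m1 m2 k / q) * real_of_int k) * L2norm_k Phi k f"
    proof (intro exI[of _ "(3/2) powr (1/2 - 1/q) * (2 * pi / c0) powr (1/q)"] allI impI)
      fix k :: int and f :: "real \<Rightarrow> complex" assume fL: "L2pos f"
      from per_kf(1)[OF assms(1,2) c0 low[of k] fL] q show "integrable lborel (\<lambda>t. (cmod (osc Phi phi k f t)) powr q)
          \<and> (LINT t|lborel. (cmod (osc Phi phi k f t)) powr q) powr (1 / q)
              \<le> (3/2) powr (1/2 - 1/q) * (2 * pi / c0) powr (1/q) * 2 powr ((1/2 - mk m1 m2 k / q) * real_of_int k) * L2norm_k Phi k f"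
        by blast
    qed
  next
    show "\<exists>C. \<forall>(k::int) (f::real \<Rightarrow> complex). L2pos f \<longrightarrow>
            (AE t in lborel. cmod (osc Phi phi k f t)
               \<le> C * 2 powr ((1/2) * real_of_int k) * L2norm_k Phi k f)"
    proof (intro exI[of _ "sqrt (3/2)"] allI impI AE_I2)
      fix k :: int and f :: "real \<Rightarrow> complex" and t assume fL: "L2pos f"
      from per_kf(2)[OF assms(1,2) c0 low[of k] fL] show "cmod (osc Phi phi k f t)
               \<le> sqrt (3/2) * 2 powr ((1/2) * real_of_int k) * L2norm_k Phi k f" by blast
    qed
  qed
qed


end
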